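(* Let $\mathbf X=(X_1,\dots,X_n)$ have mutually independent components, each taking values in a finite set $V_i\subset\mathbb{R}$, let $f:\mathbb{R}^n\to\mathbb{R}$ be arbitrary, let $c_1,\dots,c_n\ge 0$ and $C\ge0$, and set $\overline C=\big(\sum_{i=1}^n c_i\big)-C$. Define $\overline{\mathrm{EVar}}(S)=\mathrm{EVar}([n]\setminus S)$ for $S\subseteq[n]$. Then: (i) $\overline{\mathrm{EVar}}$ is monotone non-decreasing ($S_1\subseteq S_2\Rightarrow \overline{\mathrm{EVar}}(S_1)\le\overline{\mathrm{EVar}}(S_2)$) and submodular (for $S_1\subset S_2\subseteq[n]$ and $x\in[n]\setminus S_2$, $\overline{\mathrm{EVar}}(S_1\cup\{x\})-\overline{\mathrm{EVar}}(S_1)\ge \overline{\mathrm{EVar}}(S_2\cup\{x\})-\overline{\mathrm{EVar}}(S_2)$); (ii) for every $\alpha\ge1$, a set $S$ satisfies $\sum_{i\in S}c_i\ge\overline C$ and $\overline{\mathrm{EVar}}(S)\le\alpha\cdot\min\{\overline{\mathrm{EVar}}(S'):\sum_{i\in S'}c_i\ge \overline C\}$ if and only if $T=[n]\setminus S$ satisfies $\sum_{i\in T}c_i\le C$ and $\mathrm{EVar}(T)\le\alpha\cdot\min\{\mathrm{EVar}(T'):\sum_{i\in T'}c_i\le C\}$.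
   Context: For $T=\{i_1<\dots<i_k\}\subseteq[n]$ write $\mathbf X_T=(X_{i_1},\dots,X_{i_k})$ and $\mathbf V_T=V_{i_1}\times\dots\times V_{i_k}$. Define $$\mathrm{EVar}(T)=\sum_{\mathbf v\in\mathbf V_T,\ \Pr[\mathbf X_T=\mathbf v]>0}\Pr[\mathbf X_T=\mathbf v]\cdot \mathrm{Var}\big(f(\mathbf X)\mid \mathbf X_T=\mathbf v\big),$$ with $\mathrm{EVar}(\emptyset)=\mathrm{Var}(f(\mathbf X))$. The MinVar problem is: minimize $\mathrm{EVar}(T)$ over $T\subseteq[n]$ subject to $\sum_{i\in T}c_i\le C$ (here $c_i$ is the cost of cleaning object $i$ and $C$ the budget). *)

theory Defs
  imports "HOL-Probability.Probability"
begin

text \<open>Indices are 0-based: [n] is rendered as {..<n}. A random vector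
 X = (X_0,...,X_{n-1}) is a family X :: nat => 'a => real on a probability
 space M; a point of R^n is a function nat => real restricted to {..<n}.\<close>

definition cond_exp_event :: "'a measure \<Rightarrow> 'a set \<Rightarrow> ('a \<Rightarrow> real) \<Rightarrow> real" where
  "cond_exp_event M A g = (LINT \<omega>:A|M. g \<omega>) / measure M A"

definition cond_var_event :: "'a measure \<Rightarrow> 'a set \<Rightarrow> ('a \<Rightarrow> real) \<Rightarrow> real" where
  "cond_var_event M A g = cond_exp_event M A (\<lambda>\<omega>. (g \<omega> - cond_exp_event M A g)\<^sup>2)"

definition event_eq :: "'a measure \<Rightarrow> (nat \<Rightarrow> 'a \<Rightarrow> real) \<Rightarrow> nat set \<Rightarrow> (nat \<Rightarrow> real) \<Rightarrow> 'a set" where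
  "event_eq M X T v = {\<omega> \<in> space M. \<forall>i\<in>T. X i \<omega> = v i}"

definition EVar :: "'a measure \<Rightarrow> nat \<Rightarrow> (nat \<Rightarrow> 'a \<Rightarrow> real) \<Rightarrow> (nat \<Rightarrow> real set)
    \<Rightarrow> ((nat \<Rightarrow> real) \<Rightarrow> real) \<Rightarrow> nat set \<Rightarrow> real" where
  "EVar M n X V f T =
     (\<Sum>v\<in>PiE T V. if measure M (event_eq M X T v) > 0
        then measure M (event_eq M X T v) *
             cond_var_event M (event_eq M X T v) (\<lambda>\<omega>. f (\<lambda>i\<in>{..<n}. X i \<omega>))
        else 0)"

definition EVarbar :: "'a measure \<Rightarrow> nat \<Rightarrow> (nat \<Rightarrow> 'a \<Rightarrow> real) \<Rightarrow> (nat \<Rightarrow> real set)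
    \<Rightarrow> ((nat \<Rightarrow> real) \<Rightarrow> real) \<Rightarrow> nat set \<Rightarrow> real" where
  "EVarbar M n X V f S = EVar M n X V f ({..<n} - S)"

end

theory Submission
  imports Defs
begin


lemma titu2:
  fixes z1 z2 p1 p2 :: real
  assumes "p1 \<ge> 0" "p2 \<ge> 0" "p1 = 0 \<Longrightarrow> z1 = 0" "p2 = 0 \<Longrightarrow> z2 = 0"
  shows "(z1 + z2)\<^sup>2 / (p1 + p2) \<le> z1\<^sup>2 / p1 + z2\<^sup>2 / p2"
proof (cases "p1 = 0 \<or> p2 = 0")
  case True then show ?thesis using assms by auto
next
  case False
  then have p: "p1 > 0" "p2 > 0" using assms by auto
  have "0 \<le> (z1 * p2 - z2 * p1)\<^sup>2" by simp
  then have "(z1 + z2)\<^sup>2 * (p1 * p2) \<le> (z1\<^sup>2 * p2 + z2\<^sup>2 * p1) * (p1 + p2)"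
    by (simp add: power2_eq_square algebra_simps)
  then show ?thesis using p by (simp add: field_simps)
qed

lemma titu:
  fixes z p :: "'b \<Rightarrow> real"
  assumes "finite A" "\<And>a. a \<in> A \<Longrightarrow> p a \<ge> 0" "\<And>a. a \<in> A \<Longrightarrow> p a = 0 \<Longrightarrow> z a = 0"
  shows "(\<Sum>a\<in>A. z a)\<^sup>2 / (\<Sum>a\<in>A. p a) \<le> (\<Sum>a\<in>A. (z a)\<^sup>2 / p a)"
  using assms
proof (induction A rule: finite_induct)
  case empty then show ?case by simp
next
  case (insert x F)
  have sp: "(\<Sum>a\<in>F. p a) \<ge> 0" using insert by (auto intro: sum_nonneg)
  have sz: "(\<Sum>a\<in>F. p a) = 0 \<Longrightarrow> (\<Sum>a\<in>F. z a) = 0"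
  proof -
    assume "(\<Sum>a\<in>F. p a) = 0"
    then have "\<forall>a\<in>F. p a = 0" using insert sum_nonneg_eq_0_iff[of F p] by auto
    then show ?thesis using insert by auto
  qed
  have "(\<Sum>a\<in>insert x F. z a)\<^sup>2 / (\<Sum>a\<in>insert x F. p a)
      = (z x + (\<Sum>a\<in>F. z a))\<^sup>2 / (p x + (\<Sum>a\<in>F. p a))" using insert by simp
  also have "\<dots> \<le> (z x)\<^sup>2 / p x + (\<Sum>a\<in>F. z a)\<^sup>2 / (\<Sum>a\<in>F. p a)"
    by (rule titu2) (use insert sp sz in auto)
  also have "\<dots> \<le> (z x)\<^sup>2 / p x + (\<Sum>a\<in>F. (z a)\<^sup>2 / p a)" using insert by auto
  finally show ?case using insert by simp
qed

lemma var_ident: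
  fixes z \<alpha> :: "'b \<Rightarrow> real"
  assumes "finite A" "(\<Sum>a\<in>A. \<alpha> a) = 1" "\<And>a. a \<in> A \<Longrightarrow> \<alpha> a = 0 \<Longrightarrow> z a = 0"
  shows "(\<Sum>a\<in>A. (z a - \<alpha> a * (\<Sum>b\<in>A. z b))\<^sup>2 / \<alpha> a) = (\<Sum>a\<in>A. (z a)\<^sup>2 / \<alpha> a) - (\<Sum>b\<in>A. z b)\<^sup>2"
proof -
  define S where "S = (\<Sum>b\<in>A. z b)"
  have pt: "(z a - \<alpha> a * S)\<^sup>2 / \<alpha> a = (z a)\<^sup>2 / \<alpha> a - 2 * S * z a + S\<^sup>2 * \<alpha> a" if "a \<in> A" for a
  proof (cases "\<alpha> a = 0")
    case True then show ?thesis using assms that by simp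
  next
    case False then show ?thesis by (simp add: field_simps power2_eq_square)
  qed
  have "(\<Sum>a\<in>A. (z a - \<alpha> a * S)\<^sup>2 / \<alpha> a) = (\<Sum>a\<in>A. (z a)\<^sup>2 / \<alpha> a - 2 * S * z a + S\<^sup>2 * \<alpha> a)"
    using pt by (rule sum.cong[OF refl])
  also have "\<dots> = (\<Sum>a\<in>A. (z a)\<^sup>2 / \<alpha> a) - 2 * S * S + S\<^sup>2 * 1"
    by (simp add: sum.distrib sum_subtractf sum_distrib_left[symmetric] assms(2) S_def)
  finally show ?thesis unfolding S_def by (simp add: power2_eq_square)
qed

lemma alg2:
  fixes I :: "'b \<Rightarrow> 'c \<Rightarrow> real" and \<alpha> :: "'b \<Rightarrow> real" and \<beta> :: "'c \<Rightarrow> real"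
  assumes A: "finite A" and B: "finite B"
    and a0: "\<And>a. a \<in> A \<Longrightarrow> \<alpha> a \<ge> 0" and b0: "\<And>b. b \<in> B \<Longrightarrow> \<beta> b \<ge> 0"
    and a1: "(\<Sum>a\<in>A. \<alpha> a) = 1" and b1: "(\<Sum>b\<in>B. \<beta> b) = 1"
    and za: "\<And>a b. a \<in> A \<Longrightarrow> b \<in> B \<Longrightarrow> \<alpha> a = 0 \<Longrightarrow> I a b = 0"
    and zb: "\<And>a b. a \<in> A \<Longrightarrow> b \<in> B \<Longrightarrow> \<beta> b = 0 \<Longrightarrow> I a b = 0"
  shows "(\<Sum>b\<in>B. (\<Sum>a\<in>A. I a b)\<^sup>2 / \<beta> b) + (\<Sum>a\<in>A. (\<Sum>b\<in>B. I a b)\<^sup>2 / \<alpha> a)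
       \<le> (\<Sum>b\<in>B. \<Sum>a\<in>A. (I a b)\<^sup>2 / (\<alpha> a * \<beta> b)) + (\<Sum>b\<in>B. \<Sum>a\<in>A. I a b)\<^sup>2"
proof -
  define S where "S b = (\<Sum>a\<in>A. I a b)" for b
  define R where "R a = (\<Sum>b\<in>B. I a b)" for a
  define Tot where "Tot = (\<Sum>b\<in>B. S b)"
  define It where "It a b = I a b - \<alpha> a * S b" for a b
  have Sz: "\<beta> b = 0 \<Longrightarrow> S b = 0" if "b \<in> B" for b using zb that unfolding S_def by auto
  have Rz: "\<alpha> a = 0 \<Longrightarrow> R a = 0" if "a \<in> A" for a using za that unfolding R_def by auto
  have Itz: "\<beta> b = 0 \<Longrightarrow> It a b = 0" if "a \<in> A" "b \<in> B" for a b
    using zb Sz that unfolding It_def by auto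
  have TotR: "Tot = (\<Sum>a\<in>A. R a)" unfolding Tot_def S_def R_def by (rule sum.swap)
  have b1': "\<And>b. b \<in> B \<Longrightarrow> (\<Sum>a\<in>A. (It a b)\<^sup>2 / \<alpha> a) = (\<Sum>a\<in>A. (I a b)\<^sup>2 / \<alpha> a) - (S b)\<^sup>2"
    unfolding It_def S_def by (rule var_ident[OF A a1]) (use za in auto)
  have L1: "(\<Sum>b\<in>B. \<Sum>a\<in>A. (I a b)\<^sup>2 / (\<alpha> a * \<beta> b)) - (\<Sum>b\<in>B. (S b)\<^sup>2 / \<beta> b)
      = (\<Sum>a\<in>A. (\<Sum>b\<in>B. (It a b)\<^sup>2 / \<beta> b) / \<alpha> a)"
  proof -
    have "(\<Sum>b\<in>B. \<Sum>a\<in>A. (I a b)\<^sup>2 / (\<alpha> a * \<beta> b)) - (\<Sum>b\<in>B. (S b)\<^sup>2 / \<beta> b)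
        = (\<Sum>b\<in>B. ((\<Sum>a\<in>A. (I a b)\<^sup>2 / \<alpha> a) - (S b)\<^sup>2) / \<beta> b)"
      by (simp add: sum_subtractf[symmetric] diff_divide_distrib sum_divide_distrib divide_divide_eq_left)
    also have "\<dots> = (\<Sum>b\<in>B. (\<Sum>a\<in>A. (It a b)\<^sup>2 / \<alpha> a) / \<beta> b)"
      using b1' by simp
    also have "\<dots> = (\<Sum>b\<in>B. \<Sum>a\<in>A. ((It a b)\<^sup>2 / \<beta> b) / \<alpha> a)"
      by (simp add: sum_divide_distrib divide_divide_eq_left mult.commute)
    also have "\<dots> = (\<Sum>a\<in>A. (\<Sum>b\<in>B. (It a b)\<^sup>2 / \<beta> b) / \<alpha> a)"
      by (subst sum.swap) (simp add: sum_divide_distrib)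
    finally show ?thesis .
  qed
  have L2: "(\<Sum>a\<in>A. (R a)\<^sup>2 / \<alpha> a) - Tot\<^sup>2 = (\<Sum>a\<in>A. (\<Sum>b\<in>B. It a b)\<^sup>2 / \<alpha> a)"
  proof -
    have "(\<Sum>a\<in>A. (R a)\<^sup>2 / \<alpha> a) - Tot\<^sup>2 = (\<Sum>a\<in>A. (R a - \<alpha> a * Tot)\<^sup>2 / \<alpha> a)"
      unfolding TotR by (rule var_ident[OF A a1, symmetric]) (use Rz in auto)
    also have "\<dots> = (\<Sum>a\<in>A. (\<Sum>b\<in>B. It a b)\<^sup>2 / \<alpha> a)"
      by (simp add: It_def sum_subtractf R_def Tot_def sum_distrib_left)
    finally show ?thesis .
  qed
  have ineq: "(\<Sum>a\<in>A. (\<Sum>b\<in>B. It a b)\<^sup>2 / \<alpha> a) \<le> (\<Sum>a\<in>A. (\<Sum>b\<in>B. (It a b)\<^sup>2 / \<beta> b) / \<alpha> a)"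
  proof (rule sum_mono)
    fix a assume a: "a \<in> A"
    have "(\<Sum>b\<in>B. It a b)\<^sup>2 = (\<Sum>b\<in>B. It a b)\<^sup>2 / (\<Sum>b\<in>B. \<beta> b)" using b1 by simp
    also have "\<dots> \<le> (\<Sum>b\<in>B. (It a b)\<^sup>2 / \<beta> b)"
      by (rule titu[OF B]) (use b0 Itz a in auto)
    finally show "(\<Sum>b\<in>B. It a b)\<^sup>2 / \<alpha> a \<le> (\<Sum>b\<in>B. (It a b)\<^sup>2 / \<beta> b) / \<alpha> a"
      using a0[OF a] by (simp add: divide_right_mono)
  qed
  have Tot2: "(\<Sum>b\<in>B. \<Sum>a\<in>A. I a b) = Tot" unfolding Tot_def S_def ..
  have Tot3: "sum S B = Tot" unfolding Tot_def ..
  show ?thesis using L1 L2 ineq unfolding S_def[symmetric] R_def[symmetric] Tot3 by linarith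
qed



locale mv = prob_space M for M :: "'a measure" +
  fixes n :: nat and X :: "nat \<Rightarrow> 'a \<Rightarrow> real" and V :: "nat \<Rightarrow> real set"
    and f :: "(nat \<Rightarrow> real) \<Rightarrow> real"
  assumes ind: "indep_vars (\<lambda>_. borel) X {..<n}"
    and finV: "\<forall>i<n. finite (V i)"
    and inV: "\<forall>i<n. \<forall>\<omega>\<in>space M. X i \<omega> \<in> V i"
begin

abbreviation FF where "FF \<equiv> (\<lambda>\<omega>. f (\<lambda>i\<in>{..<n}. X i \<omega>))"

definition SI :: "('a \<Rightarrow> real) \<Rightarrow> nat set \<Rightarrow> (nat \<Rightarrow> real) \<Rightarrow> real" where
  "SI g T w = (LINT \<omega>:event_eq M X T w|M. g \<omega>)"

definition Q :: "nat set \<Rightarrow> real" where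
  "Q T = (\<Sum>w\<in>PiE T V. (SI FF T w)\<^sup>2 / prob (event_eq M X T w))"

lemma Xm: "i < n \<Longrightarrow> X i \<in> borel_measurable M"
  using ind unfolding indep_vars_def2 by auto

lemma ev1: "i < n \<Longrightarrow> {\<omega>\<in>space M. X i \<omega> = a} \<in> events"
proof -
  assume i: "i < n"
  have "X i -` {a} \<inter> space M \<in> events" by (rule measurable_sets[OF Xm[OF i]]) auto
  moreover have "X i -` {a} \<inter> space M = {\<omega>\<in>space M. X i \<omega> = a}" by auto
  ultimately show ?thesis by simp
qed

lemma ev_sets: "T \<subseteq> {..<n} \<Longrightarrow> event_eq M X T w \<in> events"
  unfolding event_eq_def
  by (rule sets.sets_Collect_finite_All) (auto intro!: ev1 dest: finite_subset)

lemma xi_meas: "(\<lambda>\<omega>. \<lambda>i\<in>{..<n}. X i \<omega>) \<in> measurable M (count_space (PiE {..<n} V))"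
proof -
  have cnt: "countable (PiE {..<n} V)" using finV by (auto intro!: countable_finite finite_PiE)
  show ?thesis unfolding measurable_count_space_eq_countable[OF cnt]
  proof (intro conjI funcsetI ballI)
    fix \<omega> assume "\<omega> \<in> space M" then show "(\<lambda>i\<in>{..<n}. X i \<omega>) \<in> PiE {..<n} V" using inV by (auto simp: PiE_iff)
  next
    fix a assume a: "a \<in> PiE {..<n} V"
    have "(\<lambda>\<omega>. \<lambda>i\<in>{..<n}. X i \<omega>) -` {a} \<inter> space M = event_eq M X {..<n} a"
      using a unfolding event_eq_def by (auto simp: fun_eq_iff PiE_def extensional_def)
    then show "(\<lambda>\<omega>. \<lambda>i\<in>{..<n}. X i \<omega>) -` {a} \<inter> space M \<in> sets M" using ev_sets by simp
  qed
qed
lemma FF_meas: "(\<lambda>\<omega>. h (\<lambda>i\<in>{..<n}. X i \<omega>)) \<in> borel_measurable M"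
  by (rule measurable_compose[OF xi_meas]) simp

lemma FF_int: "integrable M (\<lambda>\<omega>. h (\<lambda>i\<in>{..<n}. X i \<omega>) :: real)"
proof (rule integrable_const_bound[where B="\<Sum>v\<in>PiE {..<n} V. \<bar>h v\<bar>"])
  show "AE x in M. norm (h (\<lambda>i\<in>{..<n}. X i x)) \<le> (\<Sum>v\<in>PiE {..<n} V. \<bar>h v\<bar>)"
  proof (rule AE_I2)
    fix x assume x: "x \<in> space M"
    have "(\<lambda>i\<in>{..<n}. X i x) \<in> PiE {..<n} V" using inV x by (auto simp: PiE_iff)
    moreover have "finite (PiE {..<n} V)" using finV by (auto intro!: finite_PiE)
    ultimately show "norm (h (\<lambda>i\<in>{..<n}. X i x)) \<le> (\<Sum>v\<in>PiE {..<n} V. \<bar>h v\<bar>)"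
      using member_le_sum[of "\<lambda>i\<in>{..<n}. X i x" "PiE {..<n} V" "\<lambda>v. \<bar>h v\<bar>"] by auto
  qed
qed (rule FF_meas)

lemma ind_split:
  assumes y: "y \<in> T" and T: "T \<subseteq> {..<n}" and \<omega>: "\<omega> \<in> space M"
  shows "indicator (event_eq M X (T - {y}) w) \<omega> = (\<Sum>a\<in>V y. indicator (event_eq M X T (w(y:=a))) \<omega> :: real)"
proof -
  have yn: "y < n" using y T by auto
  have "(\<Sum>a\<in>V y. indicator (event_eq M X T (w(y:=a))) \<omega> :: real)
     = (\<Sum>a\<in>V y. if a = X y \<omega> then indicator (event_eq M X (T - {y}) w) \<omega> else 0)"
    by (rule sum.cong) (use y \<omega> in \<open>auto simp: event_eq_def indicator_def split: if_splits\<close>)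
  also have "\<dots> = indicator (event_eq M X (T - {y}) w) \<omega>"
    using finV inV yn \<omega> by (simp add: sum.delta')
  finally show ?thesis ..
qed

lemma SI_split:
  assumes y: "y \<in> T" and T: "T \<subseteq> {..<n}" and g: "integrable M g"
  shows "SI g (T - {y}) w = (\<Sum>a\<in>V y. SI g T (w(y:=a)))"
proof -
  have "SI g (T - {y}) w = (LINT \<omega>|M. (\<Sum>a\<in>V y. indicator (event_eq M X T (w(y:=a))) \<omega> *\<^sub>R g \<omega>))"
    unfolding SI_def set_lebesgue_integral_def
    by (rule Bochner_Integration.integral_cong[OF refl]) (simp add: ind_split[OF y T] scaleR_sum_left sum_distrib_right)
  also have "\<dots> = (\<Sum>a\<in>V y. SI g T (w(y:=a)))"
    unfolding SI_def set_lebesgue_integral_def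
    by (rule Bochner_Integration.integral_sum) (use integrable_mult_indicator[OF ev_sets[OF T] g] in auto)
  finally show ?thesis .
qed

lemma prob_SI: "T \<subseteq> {..<n} \<Longrightarrow> prob (event_eq M X T w) = SI (\<lambda>_. 1) T w"
  unfolding SI_def using ev_sets by (subst set_integral_const) auto

lemma prob_split:
  assumes y: "y \<in> T" and T: "T \<subseteq> {..<n}"
  shows "prob (event_eq M X (T - {y}) w) = (\<Sum>a\<in>V y. prob (event_eq M X T (w(y:=a))))"
proof -
  have "T - {y} \<subseteq> {..<n}" using T by auto
  then show ?thesis using SI_split[OF y T, of "\<lambda>_. 1"] prob_SI[OF T] prob_SI[of "T - {y}"] by simp
qed

lemma PiE_sum_split:
  assumes y: "y \<in> T"
  shows "(\<Sum>w\<in>PiE T V. G w) = (\<Sum>u\<in>PiE (T - {y}) V. \<Sum>a\<in>V y. G (u(y:=a)))"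
proof -
  have Te: "T = insert y (T - {y})" using y by auto
  have "(\<Sum>w\<in>PiE T V. G w) = (\<Sum>w\<in>PiE (insert y (T - {y})) V. G w)" using Te by simp
  also have "\<dots> = (\<Sum>p\<in>V y \<times> PiE (T - {y}) V. G ((\<lambda>(a, u). u(y := a)) p))"
    by (subst PiE_insert_eq, subst sum.reindex[OF inj_combinator]) auto
  also have "\<dots> = (\<Sum>a\<in>V y. \<Sum>u\<in>PiE (T - {y}) V. G (u(y:=a)))"
    by (simp add: sum.cartesian_product case_prod_beta)
  also have "\<dots> = (\<Sum>u\<in>PiE (T - {y}) V. \<Sum>a\<in>V y. G (u(y:=a)))"
    by (rule sum.swap)
  finally show ?thesis .
qed

lemma SI_total:
  assumes T: "T \<subseteq> {..<n}" and g: "integrable M g"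
  shows "(\<Sum>w\<in>PiE T V. SI g T w) = integral\<^sup>L M g"
proof -
  have "finite T" using T finite_subset by blast
  then show ?thesis using T
  proof (induction T rule: finite_induct)
    case empty
    have "event_eq M X {} (\<lambda>x. undefined) = space M" by (simp add: event_eq_def)
    then show ?case by (simp add: SI_def set_integral_space[OF g])
  next
    case (insert y T)
    have "(\<Sum>w\<in>PiE (insert y T) V. SI g (insert y T) w)
        = (\<Sum>u\<in>PiE (insert y T - {y}) V. \<Sum>a\<in>V y. SI g (insert y T) (u(y:=a)))"
      by (rule PiE_sum_split) simp
    also have "\<dots> = (\<Sum>u\<in>PiE T V. SI g T u)"
      using SI_split[of y "insert y T", OF _ insert(4) g] insert(2) by simp
    finally show ?case using insert by simp
  qed
qed

lemma prob_prod:
  assumes T: "T \<subseteq> {..<n}"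
  shows "prob (event_eq M X T w) = (\<Prod>i\<in>T. prob {\<omega>\<in>space M. X i \<omega> = w i})"
proof (cases "T = {}")
  case True then show ?thesis by (simp add: event_eq_def prob_space)
next
  case False
  have fT: "finite T" using T finite_subset by blast
  have e: "event_eq M X T w = (\<Inter>i\<in>T. X i -` {w i} \<inter> space M)"
    using False unfolding event_eq_def by auto
  have "prob (\<Inter>i\<in>T. X i -` {w i} \<inter> space M) = (\<Prod>i\<in>T. prob (X i -` {w i} \<inter> space M))"
    by (rule indep_setsD[OF ind[unfolded indep_vars_def2, THEN conjunct2] T False fT]) auto
  moreover have "\<And>i. X i -` {w i} \<inter> space M = {\<omega>\<in>space M. X i \<omega> = w i}" by auto
  ultimately show ?thesis using e by simp
qed

lemma q_sum: "i < n \<Longrightarrow> (\<Sum>a\<in>V i. prob {\<omega>\<in>space M. X i \<omega> = a}) = 1"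
proof -
  assume i: "i < n"
  define w :: "nat \<Rightarrow> real" where "w = (\<lambda>_. 0)"
  have p: "prob (event_eq M X ({i} - {i}) w) = (\<Sum>a\<in>V i. prob (event_eq M X {i} (w(i:=a))))"
    by (rule prob_split) (use i in auto)
  have e1: "event_eq M X ({i} - {i}) w = space M" by (simp add: event_eq_def)
  have e2: "event_eq M X {i} (w(i:=a)) = {\<omega>\<in>space M. X i \<omega> = a}" for a by (simp add: event_eq_def)
  have "prob (space M) = (\<Sum>a\<in>V i. prob {\<omega>\<in>space M. X i \<omega> = a})"
    using p unfolding e1 e2 .
  then show ?thesis using prob_space by simp
qed

lemma SI_zero:
  assumes T: "T \<subseteq> {..<n}" and p: "prob (event_eq M X T w) = 0"
  shows "SI g T w = 0"
proof -
  have "event_eq M X T w \<in> null_sets M" using p ev_sets[OF T] by (auto simp: emeasure_eq_measure)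
  then have "AE \<omega> in M. \<omega> \<notin> event_eq M X T w" by (rule AE_not_in)
  then have "AE \<omega> in M. indicator (event_eq M X T w) \<omega> *\<^sub>R g \<omega> = 0" by eventually_elim auto
  then show ?thesis unfolding SI_def set_lebesgue_integral_def by (rule integral_eq_zero_AE)
qed

end


lemma alg3:
  fixes I :: "'b \<Rightarrow> 'c \<Rightarrow> real" and \<alpha> :: "'b \<Rightarrow> real" and \<beta> :: "'c \<Rightarrow> real" and c :: real
  assumes A: "finite A" and B: "finite B"
    and a0: "\<And>a. a \<in> A \<Longrightarrow> \<alpha> a \<ge> 0" and b0: "\<And>b. b \<in> B \<Longrightarrow> \<beta> b \<ge> 0"
    and a1: "(\<Sum>a\<in>A. \<alpha> a) = 1" and b1: "(\<Sum>b\<in>B. \<beta> b) = 1"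
    and za: "\<And>a b. a \<in> A \<Longrightarrow> b \<in> B \<Longrightarrow> \<alpha> a = 0 \<Longrightarrow> I a b = 0"
    and zb: "\<And>a b. a \<in> A \<Longrightarrow> b \<in> B \<Longrightarrow> \<beta> b = 0 \<Longrightarrow> I a b = 0"
    and c: "c \<ge> 0"
  shows "(\<Sum>b\<in>B. (\<Sum>a\<in>A. I a b)\<^sup>2 / (\<beta> b * c)) + (\<Sum>a\<in>A. (\<Sum>b\<in>B. I a b)\<^sup>2 / (\<alpha> a * c))
       \<le> (\<Sum>b\<in>B. \<Sum>a\<in>A. (I a b)\<^sup>2 / (\<alpha> a * (\<beta> b * c))) + (\<Sum>b\<in>B. \<Sum>a\<in>A. I a b)\<^sup>2 / c"
proof -
  have e1: "(\<Sum>b\<in>B. (\<Sum>a\<in>A. I a b)\<^sup>2 / (\<beta> b * c)) = (\<Sum>b\<in>B. (\<Sum>a\<in>A. I a b)\<^sup>2 / \<beta> b) / c"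
    by (simp add: sum_divide_distrib divide_divide_eq_left)
  have e2: "(\<Sum>a\<in>A. (\<Sum>b\<in>B. I a b)\<^sup>2 / (\<alpha> a * c)) = (\<Sum>a\<in>A. (\<Sum>b\<in>B. I a b)\<^sup>2 / \<alpha> a) / c"
    by (simp add: sum_divide_distrib divide_divide_eq_left)
  have e3: "(\<Sum>b\<in>B. \<Sum>a\<in>A. (I a b)\<^sup>2 / (\<alpha> a * (\<beta> b * c))) = (\<Sum>b\<in>B. \<Sum>a\<in>A. (I a b)\<^sup>2 / (\<alpha> a * \<beta> b)) / c"
    by (simp add: sum_divide_distrib divide_divide_eq_left mult.assoc)
  have "((\<Sum>b\<in>B. (\<Sum>a\<in>A. I a b)\<^sup>2 / \<beta> b) + (\<Sum>a\<in>A. (\<Sum>b\<in>B. I a b)\<^sup>2 / \<alpha> a)) / c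
      \<le> ((\<Sum>b\<in>B. \<Sum>a\<in>A. (I a b)\<^sup>2 / (\<alpha> a * \<beta> b)) + (\<Sum>b\<in>B. \<Sum>a\<in>A. I a b)\<^sup>2) / c"
    by (rule divide_right_mono[OF alg2[OF assms(1-8)] c])
  then show ?thesis unfolding e1 e2 e3 by (simp add: add_divide_distrib)
qed

context mv begin

lemma EVar_eq:
  assumes T: "T \<subseteq> {..<n}"
  shows "EVar M n X V f T = integral\<^sup>L M (\<lambda>\<omega>. (FF \<omega>)\<^sup>2) - Q T"
proof -
  have trm: "(if prob (event_eq M X T w) > 0
        then prob (event_eq M X T w) * cond_var_event M (event_eq M X T w) FF else 0)
      = SI (\<lambda>\<omega>. (FF \<omega>)\<^sup>2) T w - (SI FF T w)\<^sup>2 / prob (event_eq M X T w)" for w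
  proof -
    define A where "A = event_eq M X T w"
    have As: "A \<in> events" unfolding A_def by (rule ev_sets[OF T])
    have i1: "integrable M FF" by (rule FF_int)
    have i2: "integrable M (\<lambda>\<omega>. (FF \<omega>)\<^sup>2)" by (rule FF_int)
    have key: "(LINT \<omega>:A|M. (FF \<omega> - m)\<^sup>2) = SI (\<lambda>\<omega>. (FF \<omega>)\<^sup>2) T w - 2 * m * SI FF T w + m\<^sup>2 * prob A" for m
    proof -
      have "(LINT \<omega>:A|M. (FF \<omega> - m)\<^sup>2) = (LINT \<omega>|M. indicator A \<omega> *\<^sub>R (FF \<omega>)\<^sup>2 - (2 * m) * (indicator A \<omega> *\<^sub>R FF \<omega>) + m\<^sup>2 * indicator A \<omega>)"
        unfolding set_lebesgue_integral_def
        by (rule Bochner_Integration.integral_cong[OF refl]) (simp add: power2_eq_square algebra_simps)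
      also have "\<dots> = (LINT \<omega>|M. indicator A \<omega> *\<^sub>R (FF \<omega>)\<^sup>2) - (2 * m) * (LINT \<omega>|M. indicator A \<omega> *\<^sub>R FF \<omega>) + m\<^sup>2 * (LINT \<omega>|M. indicator A \<omega>)"
      proof -
        have u: "integrable M (\<lambda>\<omega>. indicator A \<omega> *\<^sub>R (FF \<omega>)\<^sup>2)" by (rule integrable_mult_indicator[OF As i2])
        have v: "integrable M (\<lambda>\<omega>. (2 * m) * (indicator A \<omega> *\<^sub>R FF \<omega>))"
          by (rule integrable_mult_right, rule integrable_mult_indicator[OF As i1])
        have z: "integrable M (\<lambda>\<omega>. m\<^sup>2 * (indicator A \<omega> :: real))"
          by (rule integrable_mult_right, rule integrable_real_indicator) (use As in \<open>auto simp: emeasure_eq_measure\<close>)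
        have "(LINT \<omega>|M. indicator A \<omega> *\<^sub>R (FF \<omega>)\<^sup>2 - (2 * m) * (indicator A \<omega> *\<^sub>R FF \<omega>) + m\<^sup>2 * indicator A \<omega>)
          = (LINT \<omega>|M. indicator A \<omega> *\<^sub>R (FF \<omega>)\<^sup>2 - (2 * m) * (indicator A \<omega> *\<^sub>R FF \<omega>)) + (LINT \<omega>|M. m\<^sup>2 * indicator A \<omega>)"
          by (rule Bochner_Integration.integral_add[OF Bochner_Integration.integrable_diff[OF u v] z])
        also have "\<dots> = (LINT \<omega>|M. indicator A \<omega> *\<^sub>R (FF \<omega>)\<^sup>2) - (LINT \<omega>|M. (2 * m) * (indicator A \<omega> *\<^sub>R FF \<omega>)) + (LINT \<omega>|M. m\<^sup>2 * indicator A \<omega>)"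
          by (subst Bochner_Integration.integral_diff[OF u v]) simp
        finally show ?thesis by simp
      qed
      also have "\<dots> = SI (\<lambda>\<omega>. (FF \<omega>)\<^sup>2) T w - 2 * m * SI FF T w + m\<^sup>2 * prob A"
        unfolding SI_def set_lebesgue_integral_def A_def[symmetric] using As sets.sets_into_space[OF As]
        by (simp add: Int_absorb2)
      finally show ?thesis .
    qed
    show ?thesis
    proof (cases "prob A > 0")
      case True
      have cm: "cond_exp_event M A FF = SI FF T w / prob A" by (simp add: cond_exp_event_def SI_def A_def)
      have cv: "cond_var_event M A FF = (SI (\<lambda>\<omega>. (FF \<omega>)\<^sup>2) T w - 2 * (SI FF T w / prob A) * SI FF T w + (SI FF T w / prob A)\<^sup>2 * prob A) / prob A"
        unfolding cond_var_event_def cm by (subst cond_exp_event_def) (rule arg_cong[where f="\<lambda>x. x / prob A"], rule key)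
      show ?thesis unfolding A_def[symmetric] cv using True
        by (simp add: field_simps power2_eq_square)
    next
      case False
      then have "prob A = 0" using measure_nonneg[of M A] by linarith
      then show ?thesis unfolding A_def[symmetric] using SI_zero[OF T] A_def by simp
    qed
  qed
  have "EVar M n X V f T = (\<Sum>w\<in>PiE T V. SI (\<lambda>\<omega>. (FF \<omega>)\<^sup>2) T w - (SI FF T w)\<^sup>2 / prob (event_eq M X T w))"
    unfolding EVar_def using trm by simp
  also have "\<dots> = integral\<^sup>L M (\<lambda>\<omega>. (FF \<omega>)\<^sup>2) - Q T"
    unfolding Q_def sum_subtractf by (subst SI_total[OF T]) (auto intro: FF_int)
  finally show ?thesis .
qed

end


lemma gen_mono:
  fixes Q :: "nat set \<Rightarrow> real"
  assumes loc: "\<And>T y. y \<in> T \<Longrightarrow> T \<subseteq> N \<Longrightarrow> Q (T - {y}) \<le> Q T"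
    and "T' \<subseteq> T" "T \<subseteq> N" "finite T"
  shows "Q T' \<le> Q T"
proof -
  have "finite D \<Longrightarrow> D \<subseteq> T \<Longrightarrow> Q (T - D) \<le> Q T" for D
  proof (induction D rule: finite_induct)
    case empty then show ?case by simp
  next
    case (insert d D)
    have e: "T - insert d D = (T - D) - {d}" by auto
    have "Q ((T - D) - {d}) \<le> Q (T - D)"
      by (rule loc) (use insert.prems insert.hyps assms in auto)
    moreover have "Q (T - D) \<le> Q T" by (rule insert.IH) (use insert.prems in auto)
    ultimately show ?case unfolding e by linarith
  qed
  note H = this
  have fD: "finite (T - T')" using assms finite_subset by blast
  have eq: "T - (T - T') = T'" using assms by auto
  have "Q (T - (T - T')) \<le> Q T" by (rule H[OF fD]) auto
  then show ?thesis unfolding eq .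
qed

lemma gen_submod:
  fixes Q :: "nat set \<Rightarrow> real"
  assumes loc: "\<And>T x y. x \<in> T \<Longrightarrow> y \<in> T \<Longrightarrow> x \<noteq> y \<Longrightarrow> T \<subseteq> N \<Longrightarrow> Q (T - {y}) - Q (T - {x} - {y}) \<le> Q T - Q (T - {x})"
    and "x \<in> T2" "T2 \<subseteq> T1" "T1 \<subseteq> N" "finite T1"
  shows "Q T2 - Q (T2 - {x}) \<le> Q T1 - Q (T1 - {x})"
proof -
  have "finite D \<Longrightarrow> D \<subseteq> T1 \<Longrightarrow> x \<notin> D \<Longrightarrow> Q (T1 - D) - Q (T1 - D - {x}) \<le> Q T1 - Q (T1 - {x})" for D
  proof (induction D rule: finite_induct)
    case empty then show ?case by simp
  next
    case (insert d D)
    have e1: "T1 - insert d D = (T1 - D) - {d}" by auto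
    have e2: "T1 - D - {d} - {x} = (T1 - D) - {x} - {d}" by auto
    have "Q ((T1 - D) - {d}) - Q ((T1 - D) - {x} - {d}) \<le> Q (T1 - D) - Q (T1 - D - {x})"
      by (rule loc) (use insert.prems insert.hyps assms in auto)
    moreover have "Q (T1 - D) - Q (T1 - D - {x}) \<le> Q T1 - Q (T1 - {x})"
      by (rule insert.IH) (use insert.prems in auto)
    moreover have "Q (T1 - insert d D) - Q (T1 - insert d D - {x}) = Q ((T1 - D) - {d}) - Q ((T1 - D) - {x} - {d})"
      by (simp only: e1 e2)
    ultimately show ?case by linarith
  qed
  note H = this
  have fD: "finite (T1 - T2)" using assms finite_subset by blast
  have eq: "T1 - (T1 - T2) = T2" using assms by auto
  have "Q (T1 - (T1 - T2)) - Q (T1 - (T1 - T2) - {x}) \<le> Q T1 - Q (T1 - {x})"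
    by (rule H[OF fD]) (use assms in auto)
  then show ?thesis unfolding eq .
qed

context mv begin

abbreviation q where "q i a \<equiv> prob {\<omega>\<in>space M. X i \<omega> = a}"

lemma Q_mono_local:
  assumes y: "y \<in> T" and T: "T \<subseteq> {..<n}"
  shows "Q (T - {y}) \<le> Q T"
proof -
  have yn: "y < n" using y T by auto
  have "Q T = (\<Sum>u\<in>PiE (T - {y}) V. \<Sum>a\<in>V y. (SI FF T (u(y:=a)))\<^sup>2 / prob (event_eq M X T (u(y:=a))))"
    unfolding Q_def by (rule PiE_sum_split[OF y])
  moreover have "Q (T - {y}) = (\<Sum>u\<in>PiE (T - {y}) V. (\<Sum>a\<in>V y. SI FF T (u(y:=a)))\<^sup>2 / (\<Sum>a\<in>V y. prob (event_eq M X T (u(y:=a)))))"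
    unfolding Q_def SI_split[OF y T FF_int] prob_split[OF y T] ..
  moreover have "(\<Sum>a\<in>V y. SI FF T (u(y:=a)))\<^sup>2 / (\<Sum>a\<in>V y. prob (event_eq M X T (u(y:=a))))
      \<le> (\<Sum>a\<in>V y. (SI FF T (u(y:=a)))\<^sup>2 / prob (event_eq M X T (u(y:=a))))" for u
    by (rule titu) (use finV yn SI_zero[OF T] in auto)
  ultimately show ?thesis by (simp add: sum_mono)
qed

lemma Q_submod_local:
  assumes x: "x \<in> T" and y: "y \<in> T" and xy: "x \<noteq> y" and T: "T \<subseteq> {..<n}"
  shows "Q (T - {y}) - Q (T - {x} - {y}) \<le> Q T - Q (T - {x})"
proof -
  define U where "U = T - {x} - {y}"
  have xn: "x < n" and yn: "y < n" using x y T by auto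
  have Tx: "T - {x} \<subseteq> {..<n}" and Ty: "T - {y} \<subseteq> {..<n}" using T by auto
  have yTx: "y \<in> T - {x}" and xTy: "x \<in> T - {y}" using x y xy by auto
  have UU: "T - {y} - {x} = U" unfolding U_def by auto
  have UT: "U \<subseteq> {..<n}" unfolding U_def using T by auto
  have Tins: "T = insert x (insert y U)" and xU: "x \<notin> insert y U" and yU: "y \<notin> U"
    unfolding U_def using x y xy by auto
  have Txins: "T - {x} = insert y U" and Tyins: "T - {y} = insert x U"
    unfolding U_def using x y xy by auto
  define c where "c u = prob (event_eq M X U u)" for u
  have cprod: "c u = (\<Prod>i\<in>U. q i (u i))" for u unfolding c_def by (rule prob_prod[OF UT])
  have fU: "finite U" by (rule finite_subset[OF UT finite_lessThan])
  have PT: "prob (event_eq M X T (u(y:=b, x:=a))) = q x a * (q y b * c u)" if "u \<in> PiE U V" for u a b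
  proof -
    have "prob (event_eq M X T (u(y:=b, x:=a))) = (\<Prod>i\<in>insert x (insert y U). q i ((u(y:=b, x:=a)) i))"
      using prob_prod[OF T, of "u(y:=b, x:=a)"] by (simp only: Tins)
    also have "\<dots> = q x a * (q y b * (\<Prod>i\<in>U. q i ((u(y:=b, x:=a)) i)))"
      using fU xU yU xy by simp
    also have "(\<Prod>i\<in>U. q i ((u(y:=b, x:=a)) i)) = c u"
      unfolding cprod using xU yU by (intro prod.cong) auto
    finally show ?thesis .
  qed
  have PTx: "prob (event_eq M X (T - {x}) (u(y:=b))) = q y b * c u" if "u \<in> PiE U V" for u b
  proof -
    have "prob (event_eq M X (T - {x}) (u(y:=b))) = (\<Prod>i\<in>insert y U. q i ((u(y:=b)) i))"
      using prob_prod[OF Tx, of "u(y:=b)"] by (simp only: Txins)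
    also have "\<dots> = q y b * (\<Prod>i\<in>U. q i ((u(y:=b)) i))" using fU yU by simp
    also have "(\<Prod>i\<in>U. q i ((u(y:=b)) i)) = c u"
      unfolding cprod using yU by (intro prod.cong) auto
    finally show ?thesis .
  qed
  have PTy: "prob (event_eq M X (T - {y}) (u(x:=a))) = q x a * c u" if "u \<in> PiE U V" for u a
  proof -
    have "prob (event_eq M X (T - {y}) (u(x:=a))) = (\<Prod>i\<in>insert x U. q i ((u(x:=a)) i))"
      using prob_prod[OF Ty, of "u(x:=a)"] by (simp only: Tyins)
    also have "\<dots> = q x a * (\<Prod>i\<in>U. q i ((u(x:=a)) i))" using fU xU by simp
    also have "(\<Prod>i\<in>U. q i ((u(x:=a)) i)) = c u"
      unfolding cprod using xU by (intro prod.cong) auto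
    finally show ?thesis .
  qed
  define I where "I u a b = SI FF T (u(y:=b, x:=a))" for u a b
  have ITx: "SI FF (T - {x}) (u(y:=b)) = (\<Sum>a\<in>V x. I u a b)" for u b
    unfolding I_def by (rule SI_split[OF x T FF_int])
  have ITy: "SI FF (T - {y}) (u(x:=a)) = (\<Sum>b\<in>V y. I u a b)" for u a
    unfolding I_def SI_split[OF y T FF_int] using xy by (simp add: fun_upd_twist)
  have IU: "SI FF U u = (\<Sum>b\<in>V y. \<Sum>a\<in>V x. I u a b)" for u
    unfolding U_def SI_split[OF yTx Tx FF_int] ITx ..
  have QT: "Q T = (\<Sum>u\<in>PiE U V. \<Sum>b\<in>V y. \<Sum>a\<in>V x. (I u a b)\<^sup>2 / (q x a * (q y b * c u)))"
  proof -
    have "Q T = (\<Sum>w\<in>PiE (T - {x}) V. \<Sum>a\<in>V x. (SI FF T (w(x:=a)))\<^sup>2 / prob (event_eq M X T (w(x:=a))))"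
      unfolding Q_def by (rule PiE_sum_split[OF x, where G="\<lambda>w. (SI FF T w)\<^sup>2 / prob (event_eq M X T w)"])
    also have "\<dots> = (\<Sum>u\<in>PiE U V. \<Sum>b\<in>V y. \<Sum>a\<in>V x. (SI FF T (u(y:=b, x:=a)))\<^sup>2 / prob (event_eq M X T (u(y:=b, x:=a))))"
      unfolding U_def by (rule PiE_sum_split[OF yTx, where G="\<lambda>w. \<Sum>a\<in>V x. (SI FF T (w(x:=a)))\<^sup>2 / prob (event_eq M X T (w(x:=a)))"])
    also have "\<dots> = (\<Sum>u\<in>PiE U V. \<Sum>b\<in>V y. \<Sum>a\<in>V x. (I u a b)\<^sup>2 / (q x a * (q y b * c u)))"
      unfolding I_def by (intro sum.cong refl) (simp add: PT)
    finally show ?thesis .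
  qed
  have QTx: "Q (T - {x}) = (\<Sum>u\<in>PiE U V. \<Sum>b\<in>V y. (\<Sum>a\<in>V x. I u a b)\<^sup>2 / (q y b * c u))"
  proof -
    have "Q (T - {x}) = (\<Sum>u\<in>PiE U V. \<Sum>b\<in>V y. (SI FF (T - {x}) (u(y:=b)))\<^sup>2 / prob (event_eq M X (T - {x}) (u(y:=b))))"
      unfolding Q_def U_def by (rule PiE_sum_split[OF yTx, where G="\<lambda>w. (SI FF (T - {x}) w)\<^sup>2 / prob (event_eq M X (T - {x}) w)"])
    also have "\<dots> = (\<Sum>u\<in>PiE U V. \<Sum>b\<in>V y. (\<Sum>a\<in>V x. I u a b)\<^sup>2 / (q y b * c u))"
      unfolding ITx by (intro sum.cong refl) (simp add: PTx)
    finally show ?thesis .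
  qed
  have QTy: "Q (T - {y}) = (\<Sum>u\<in>PiE U V. \<Sum>a\<in>V x. (\<Sum>b\<in>V y. I u a b)\<^sup>2 / (q x a * c u))"
  proof -
    have "Q (T - {y}) = (\<Sum>u\<in>PiE (T - {y} - {x}) V. \<Sum>a\<in>V x. (SI FF (T - {y}) (u(x:=a)))\<^sup>2 / prob (event_eq M X (T - {y}) (u(x:=a))))"
      unfolding Q_def by (rule PiE_sum_split[OF xTy, where G="\<lambda>w. (SI FF (T - {y}) w)\<^sup>2 / prob (event_eq M X (T - {y}) w)"])
    also have "\<dots> = (\<Sum>u\<in>PiE U V. \<Sum>a\<in>V x. (\<Sum>b\<in>V y. I u a b)\<^sup>2 / (q x a * c u))"
      unfolding ITy UU by (intro sum.cong refl) (simp add: PTy)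
    finally show ?thesis .
  qed
  have QU: "Q (T - {x} - {y}) = (\<Sum>u\<in>PiE U V. (\<Sum>b\<in>V y. \<Sum>a\<in>V x. I u a b)\<^sup>2 / c u)"
    unfolding Q_def U_def[symmetric] IU c_def ..
  have loc: "(\<Sum>b\<in>V y. (\<Sum>a\<in>V x. I u a b)\<^sup>2 / (q y b * c u)) + (\<Sum>a\<in>V x. (\<Sum>b\<in>V y. I u a b)\<^sup>2 / (q x a * c u))
       \<le> (\<Sum>b\<in>V y. \<Sum>a\<in>V x. (I u a b)\<^sup>2 / (q x a * (q y b * c u))) + (\<Sum>b\<in>V y. \<Sum>a\<in>V x. I u a b)\<^sup>2 / c u"
    if u: "u \<in> PiE U V" for u
  proof (rule alg3)
    show "finite (V x)" "finite (V y)" using finV xn yn by auto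
    show "(\<Sum>a\<in>V x. q x a) = 1" "(\<Sum>b\<in>V y. q y b) = 1" using q_sum xn yn by auto
    show "c u \<ge> 0" unfolding c_def by simp
    show "I u a b = 0" if "a \<in> V x" "b \<in> V y" "q x a = 0" for a b
      unfolding I_def by (rule SI_zero[OF T]) (simp add: PT[OF u] that)
    show "I u a b = 0" if "a \<in> V x" "b \<in> V y" "q y b = 0" for a b
      unfolding I_def by (rule SI_zero[OF T]) (simp add: PT[OF u] that)
  qed auto
  have "Q (T - {x}) + Q (T - {y}) \<le> Q T + Q (T - {x} - {y})"
    unfolding QT QTx QTy QU sum.distrib[symmetric] by (rule sum_mono) (rule loc)
  then show ?thesis by linarith
qed

lemma Q_mono:
  assumes "T' \<subseteq> T" "T \<subseteq> {..<n}"
  shows "Q T' \<le> Q T"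
  by (rule gen_mono[where N="{..<n}", OF Q_mono_local assms]) (use assms finite_subset[OF _ finite_lessThan] in auto)+

lemma Q_submod:
  assumes "x \<in> T2" "T2 \<subseteq> T1" "T1 \<subseteq> {..<n}"
  shows "Q T2 - Q (T2 - {x}) \<le> Q T1 - Q (T1 - {x})"
  by (rule gen_submod[where N="{..<n}", OF Q_submod_local assms]) (use assms finite_subset[OF _ finite_lessThan] in auto)+

end

theorem mainTheorem4:
  fixes M :: "'a measure" and n :: nat and X :: "nat \<Rightarrow> 'a \<Rightarrow> real"
    and V :: "nat \<Rightarrow> real set" and f :: "(nat \<Rightarrow> real) \<Rightarrow> real"
    and c :: "nat \<Rightarrow> real" and C :: real
  assumes "prob_space M"
    and "prob_space.indep_vars M (\<lambda>_. borel) X {..<n}"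
    and "\<forall>i<n. finite (V i)"
    and "\<forall>i<n. \<forall>\<omega>\<in>space M. X i \<omega> \<in> V i"
    and "\<forall>i<n. c i \<ge> 0"
    and "C \<ge> 0"
  shows
    "(\<forall>S1 S2. S1 \<subseteq> S2 \<and> S2 \<subseteq> {..<n} \<longrightarrow> EVarbar M n X V f S1 \<le> EVarbar M n X V f S2)
   \<and> (\<forall>S1 S2 x. S1 \<subset> S2 \<and> S2 \<subseteq> {..<n} \<and> x \<in> {..<n} - S2 \<longrightarrow>
        EVarbar M n X V f (insert x S1) - EVarbar M n X V f S1
          \<ge> EVarbar M n X V f (insert x S2) - EVarbar M n X V f S2)
   \<and> (\<forall>\<alpha>::real. \<alpha> \<ge> 1 \<longrightarrow> (\<forall>S. S \<subseteq> {..<n} \<longrightarrow>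
        ((sum c S \<ge> (\<Sum>i<n. c i) - C \<and>
          EVarbar M n X V f S \<le> \<alpha> * Min {EVarbar M n X V f S' | S'.
              S' \<subseteq> {..<n} \<and> sum c S' \<ge> (\<Sum>i<n. c i) - C})
         \<longleftrightarrow>
         (sum c ({..<n} - S) \<le> C \<and>
          EVar M n X V f ({..<n} - S) \<le> \<alpha> * Min {EVar M n X V f T' | T'.
              T' \<subseteq> {..<n} \<and> sum c T' \<le> C}))))"
proof -
  have "mv M n X V" unfolding mv_def mv_axioms_def using assms by auto
  then interpret mv M n X V f .
  define Z where "Z = integral\<^sup>L M (\<lambda>\<omega>. (FF \<omega>)\<^sup>2)"
  have EV: "EVar M n X V f T = Z - Q T" if "T \<subseteq> {..<n}" for T
    using EVar_eq[OF that] unfolding Z_def .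
  have EVb: "EVarbar M n X V f S = Z - Q ({..<n} - S)" for S
    unfolding EVarbar_def by (rule EV) auto
  have sumc: "sum c ({..<n} - S') = (\<Sum>i<n. c i) - sum c S'" if "S' \<subseteq> {..<n}" for S'
    using that by (simp add: sum_diff finite_subset)
  show ?thesis
  proof (intro conjI allI impI)
    fix S1 S2 assume h: "S1 \<subseteq> S2 \<and> S2 \<subseteq> {..<n}"
    have "Q ({..<n} - S2) \<le> Q ({..<n} - S1)" by (rule Q_mono) (use h in auto)
    then show "EVarbar M n X V f S1 \<le> EVarbar M n X V f S2" unfolding EVb by linarith
  next
    fix S1 S2 x assume h: "S1 \<subset> S2 \<and> S2 \<subseteq> {..<n} \<and> x \<in> {..<n} - S2"
    have e1: "{..<n} - insert x S1 = ({..<n} - S1) - {x}" by auto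
    have e2: "{..<n} - insert x S2 = ({..<n} - S2) - {x}" by auto
    have "Q ({..<n} - S2) - Q (({..<n} - S2) - {x}) \<le> Q ({..<n} - S1) - Q (({..<n} - S1) - {x})"
      by (rule Q_submod) (use h in auto)
    then show "EVarbar M n X V f (insert x S1) - EVarbar M n X V f S1
          \<ge> EVarbar M n X V f (insert x S2) - EVarbar M n X V f S2"
      unfolding EVb e1 e2 by linarith
  next
    fix \<alpha> :: real and S assume "1 \<le> \<alpha>" and S: "S \<subseteq> {..<n}"
    have sets: "{EVarbar M n X V f S' | S'. S' \<subseteq> {..<n} \<and> sum c S' \<ge> (\<Sum>i<n. c i) - C}
        = {EVar M n X V f T' | T'. T' \<subseteq> {..<n} \<and> sum c T' \<le> C}"
    proof (rule set_eqI, rule iffI)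
      fix z assume "z \<in> {EVarbar M n X V f S' | S'. S' \<subseteq> {..<n} \<and> sum c S' \<ge> (\<Sum>i<n. c i) - C}"
      then obtain S' where z: "z = EVarbar M n X V f S'" "S' \<subseteq> {..<n}" "sum c S' \<ge> (\<Sum>i<n. c i) - C" by blast
      have "z = EVar M n X V f ({..<n} - S')" "{..<n} - S' \<subseteq> {..<n}" "sum c ({..<n} - S') \<le> C"
        using z sumc[OF z(2)] unfolding EVarbar_def by auto
      then show "z \<in> {EVar M n X V f T' | T'. T' \<subseteq> {..<n} \<and> sum c T' \<le> C}" by blast
    next
      fix z assume "z \<in> {EVar M n X V f T' | T'. T' \<subseteq> {..<n} \<and> sum c T' \<le> C}"
      then obtain T' where z: "z = EVar M n X V f T'" "T' \<subseteq> {..<n}" "sum c T' \<le> C" by blast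
      have eq: "{..<n} - ({..<n} - T') = T'" using z(2) by auto
      have "z = EVarbar M n X V f ({..<n} - T')" "{..<n} - T' \<subseteq> {..<n}" "sum c ({..<n} - T') \<ge> (\<Sum>i<n. c i) - C"
        using z sumc[OF z(2)] unfolding EVarbar_def eq by auto
      then show "z \<in> {EVarbar M n X V f S' | S'. S' \<subseteq> {..<n} \<and> sum c S' \<ge> (\<Sum>i<n. c i) - C}" by blast
    qed
    show "(sum c S \<ge> (\<Sum>i<n. c i) - C \<and>
          EVarbar M n X V f S \<le> \<alpha> * Min {EVarbar M n X V f S' | S'.
              S' \<subseteq> {..<n} \<and> sum c S' \<ge> (\<Sum>i<n. c i) - C})
         \<longleftrightarrow>
         (sum c ({..<n} - S) \<le> C \<and>
          EVar M n X V f ({..<n} - S) \<le> \<alpha> * Min {EVar M n X V f T' | T'.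
              T' \<subseteq> {..<n} \<and> sum c T' \<le> C})"
      unfolding sets EVarbar_def[of M n X V f S] sumc[OF S] by auto
  qed
qed

end
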